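(* For an integer $k\ge 3$, let $G_k$ be the plane graph obtained from a cycle $w_0w_1\cdots w_{k-1}w_0$ by adding, for each $i\in\{0,\dots,k-1\}$, a new vertex $p_i$ in the outer face adjacent to $w_i$ and $w_{i+1}$ (indices modulo $k$), embedded so that the result is plane (the cycle bounds an inner face $f_1$, each $p_iw_iw_{i+1}$ bounds a triangular face, and the remaining face is the outer face $f_2$). Then $G_k$ is internally 3-connected, and every spanning tree of the plane dual $G_k^*$ has maximum degree at least $\lceil k/2\rceil$.
   Context: A plane graph is internally 3-connected if it is 2-connected and every 2-vertex cut consists of two vertices of the outer face boundary, each component of the graph minus the cut containing an outer-face vertex. $G_k^*$ denotes the plane dual of $G_k$, which may contain multiple edges. *)

theory Defs
  imports Complex_Main
begin

definition sg_adj :: "'v set \<Rightarrow> 'v set set \<Rightarrow> 'v \<Rightarrow> 'v \<Rightarrow> bool" where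
  "sg_adj V E x y \<longleftrightarrow> x \<in> V \<and> y \<in> V \<and> x \<noteq> y \<and> {x, y} \<in> E"

definition sg_conn :: "'v set \<Rightarrow> 'v set set \<Rightarrow> 'v \<Rightarrow> 'v \<Rightarrow> bool" where
  "sg_conn V E = (sg_adj V E)\<^sup>*\<^sup>*"

definition sg_connected :: "'v set \<Rightarrow> 'v set set \<Rightarrow> bool" where
  "sg_connected V E \<longleftrightarrow> V \<noteq> {} \<and> (\<forall>u\<in>V. \<forall>v\<in>V. sg_conn V E u v)"

definition two_connected :: "'v set \<Rightarrow> 'v set set \<Rightarrow> bool" where
  "two_connected V E \<longleftrightarrow> card V \<ge> 3 \<and> sg_connected V E \<and> (\<forall>x\<in>V. sg_connected (V - {x}) E)"

definition internally_3_connected :: "'v set \<Rightarrow> 'v set set \<Rightarrow> 'v set \<Rightarrow> bool" where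
  "internally_3_connected V E Outer \<longleftrightarrow> two_connected V E \<and>
     (\<forall>u v. u \<in> V \<and> v \<in> V \<and> u \<noteq> v \<and> \<not> sg_connected (V - {u, v}) E \<longrightarrow>
        u \<in> Outer \<and> v \<in> Outer \<and>
        (\<forall>x \<in> V - {u, v}. \<exists>w \<in> Outer - {u, v}. sg_conn (V - {u, v}) E x w))"

definition mg_adj :: "'e set \<Rightarrow> ('e \<Rightarrow> 'f set) \<Rightarrow> 'f \<Rightarrow> 'f \<Rightarrow> bool" where
  "mg_adj T ends u v \<longleftrightarrow> (\<exists>e\<in>T. ends e = {u, v})"

definition mg_conn :: "'e set \<Rightarrow> ('e \<Rightarrow> 'f set) \<Rightarrow> 'f \<Rightarrow> 'f \<Rightarrow> bool" where
  "mg_conn T ends = (mg_adj T ends)\<^sup>*\<^sup>*"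

text \<open>A spanning tree of the multigraph (V, D, ends): an edge subset T that connects all
  of V and is acyclic, i.e. contains no loop and no edge lying on a cycle (every edge of T joins
  two distinct vertices that are disconnected in T without that edge; in particular parallel
  edges form a cycle).\<close>
definition mg_spanning_tree :: "'f set \<Rightarrow> 'e set \<Rightarrow> ('e \<Rightarrow> 'f set) \<Rightarrow> 'e set \<Rightarrow> bool" where
  "mg_spanning_tree V D ends T \<longleftrightarrow> T \<subseteq> D \<and>
     (\<forall>u\<in>V. \<forall>v\<in>V. mg_conn T ends u v) \<and>
     (\<forall>e\<in>T. \<exists>u v. u \<noteq> v \<and> ends e = {u, v} \<and> \<not> mg_conn (T - {e}) ends u v)"

definition mg_degree :: "'e set \<Rightarrow> ('e \<Rightarrow> 'f set) \<Rightarrow> 'f \<Rightarrow> nat" where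
  "mg_degree T ends f = card {e \<in> T. f \<in> ends e}"

text \<open>Given the faces F of a plane graph and the boundary edge set bd f of each face, the dual
  multigraph has vertex set F and one dual edge e* for each edge e, joining the faces whose
  boundaries contain e.\<close>
definition dual_ends :: "'f set \<Rightarrow> ('f \<Rightarrow> 'e set) \<Rightarrow> 'e \<Rightarrow> 'f set" where
  "dual_ends F bd e = {f \<in> F. e \<in> bd f}"

datatype gvert = W nat | P nat
datatype gface = F1 | Tri nat | F2

definition Gk_V :: "nat \<Rightarrow> gvert set" where
  "Gk_V k = W ` {..<k} \<union> P ` {..<k}"

definition cyc_edge :: "nat \<Rightarrow> nat \<Rightarrow> gvert set" where
  "cyc_edge k i = {W i, W (Suc i mod k)}"

definition spoke1 :: "nat \<Rightarrow> gvert set" where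
  "spoke1 i = {P i, W i}"

definition spoke2 :: "nat \<Rightarrow> nat \<Rightarrow> gvert set" where
  "spoke2 k i = {P i, W (Suc i mod k)}"

definition Gk_E :: "nat \<Rightarrow> gvert set set" where
  "Gk_E k = (\<Union>i<k. {cyc_edge k i, spoke1 i, spoke2 k i})"

definition Gk_faces :: "nat \<Rightarrow> gface set" where
  "Gk_faces k = {F1, F2} \<union> Tri ` {..<k}"

text \<open>Face boundaries of the plane embedding: the cycle bounds the inner face F1, the triangle
  p_i w_i w_(i+1) bounds the face Tri i, and the outer face F2 is bounded by the remaining
  edges (all edges p_i w_i, p_i w_(i+1)).\<close>
fun Gk_bd :: "nat \<Rightarrow> gface \<Rightarrow> gvert set set" where
  "Gk_bd k F1 = cyc_edge k ` {..<k}"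
| "Gk_bd k (Tri i) = {cyc_edge k i, spoke1 i, spoke2 k i}"
| "Gk_bd k F2 = (\<Union>i<k. {spoke1 i, spoke2 k i})"

definition Gk_outer :: "nat \<Rightarrow> gvert set" where
  "Gk_outer k = \<Union> (Gk_bd k F2)"

end

theory Submission
  imports Defs
begin

definition gv :: "nat \<Rightarrow> nat \<Rightarrow> gvert" where
  "gv k n = (let r = n mod (2*k) in if even r then W (r div 2) else P (r div 2))"

lemma suc_mod: "j < k \<Longrightarrow> Suc j mod k = (if Suc j = k then 0 else Suc j)"
  by auto

lemma gv_in: "k > 0 \<Longrightarrow> gv k n \<in> Gk_V k"
proof -
  assume k: "k > 0"
  let ?r = "n mod (2*k)"
  have "?r < 2*k" using k by simp
  then have "?r div 2 < k" by linarith
  then show ?thesis unfolding gv_def Gk_V_def Let_def by auto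
qed

lemma gv_adj:
  assumes k: "k \<ge> 2"
  shows "gv k n \<noteq> gv k (Suc n) \<and> {gv k n, gv k (Suc n)} \<in> Gk_E k"
proof -
  define r where "r = n mod (2*k)"
  have r: "r < 2*k" using k unfolding r_def by simp
  show ?thesis
  proof (cases "even r")
    case True
    then obtain i where i: "r = 2*i" by blast
    have ik: "i < k" using r i by simp
    have "Suc n mod (2*k) = Suc r" using r unfolding r_def
      by (metis True even_Suc mod_Suc r_def dvd_mult_left dvd_refl)
    then have "gv k (Suc n) = P i" using i unfolding gv_def Let_def by simp
    moreover have "gv k n = W i" using i unfolding gv_def Let_def r_def[symmetric] by simp
    moreover have "spoke1 i \<in> Gk_E k" using ik unfolding Gk_E_def by blast
    ultimately show ?thesis unfolding spoke1_def by (simp add: insert_commute)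
  next
    case False
    then obtain i where i: "r = 2*i+1" by (metis oddE)
    have ik: "i < k" using r i by simp
    have gn: "gv k n = P i" using i unfolding gv_def Let_def r_def[symmetric] by simp
    have "Suc n mod (2*k) = (if Suc r = 2*k then 0 else Suc r)"
      unfolding r_def by (simp add: mod_Suc)
    then have "gv k (Suc n) = W (Suc i mod k)"
      using i ik unfolding gv_def Let_def by (auto simp: suc_mod)
    moreover have "spoke2 k i \<in> Gk_E k" using ik unfolding Gk_E_def by blast
    ultimately show ?thesis using gn unfolding spoke2_def by simp
  qed
qed

lemma gv_modeq: "k > 0 \<Longrightarrow> gv k a = gv k b \<Longrightarrow> a mod (2*k) = b mod (2*k)"
  unfolding gv_def Let_def
  by (auto split: if_splits) (metis odd_two_times_div_two_succ even_two_times_div_two)+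

lemma gv_inj:
  assumes k: "k > 0" and "m \<le> a" "a < m + 2*k" "m \<le> b" "b < m + 2*k" "gv k a = gv k b"
  shows "a = b"
proof (rule ccontr)
  assume ne: "a \<noteq> b"
  have eq: "a mod (2*k) = b mod (2*k)" using gv_modeq[OF k assms(6)] .
  show False
  proof (cases "a < b")
    case True
    then have "2*k dvd b - a" using eq by (metis less_or_eq_imp_le mod_eq_dvd_iff_nat)
    moreover have "0 < b - a" "b - a < 2*k" using True assms by auto
    ultimately show False using dvd_imp_le by fastforce
  next
    case False
    then have "b < a" using ne by simp
    then have "2*k dvd a - b" using eq by (metis less_or_eq_imp_le mod_eq_dvd_iff_nat)
    moreover have "0 < a - b" "a - b < 2*k" using \<open>b < a\<close> assms by auto
    ultimately show False using dvd_imp_le by fastforce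
  qed
qed

lemma window_mod:
  fixes K r m :: nat
  assumes K: "K > 0" and r: "r < K"
  shows "\<exists>n. m \<le> n \<and> n < m + K \<and> n mod K = r"
proof -
  define q where "q = m div K"
  have m: "m = q*K + m mod K" unfolding q_def using div_mult_mod_eq[of m K] by linarith
  have mk: "m mod K < K" using K by simp
  show ?thesis
  proof (cases "q*K + r \<ge> m")
    case True
    have "(q*K + r) mod K = r" using r by simp
    then show ?thesis using True m mk r by (intro exI[of _ "q*K+r"]) linarith
  next
    case False
    have "((Suc q)*K + r) mod K = r" using r by (metis mod_less mod_mult_self3)
    moreover have "m \<le> Suc q * K + r" "Suc q * K + r < m + K" using False m mk by simp_all
    ultimately show ?thesis by blast
  qed
qed

lemma gv_surj:
  assumes k: "k > 0" and x: "x \<in> Gk_V k"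
  shows "\<exists>n. m \<le> n \<and> n < m + 2*k \<and> gv k n = x"
proof -
  from x obtain i where i: "i < k" and d: "x = W i \<or> x = P i" unfolding Gk_V_def by auto
  from d show ?thesis
  proof
    assume xw: "x = W i"
    obtain n where "m \<le> n" "n < m + 2*k" "n mod (2*k) = 2*i" using window_mod[of "2*k" "2*i" m] k i by auto
    then show ?thesis using xw by (intro exI[of _ n]) (simp add: gv_def)
  next
    assume xp: "x = P i"
    obtain n where "m \<le> n" "n < m + 2*k" "n mod (2*k) = 2*i+1" using window_mod[of "2*k" "2*i+1" m] k i by auto
    then show ?thesis using xp by (intro exI[of _ n]) (simp add: gv_def)
  qed
qed

lemma sg_conn_sym: "sg_conn V E x y \<Longrightarrow> sg_conn V E y x"
  unfolding sg_conn_def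
proof (induction rule: rtranclp_induct)
  case base then show ?case by simp
next
  case (step y z)
  have "sg_adj V E z y" using step(2) unfolding sg_adj_def by (auto simp: insert_commute)
  then show ?case using step(3) by (rule converse_rtranclp_into_rtranclp)
qed

lemma path_conn:
  assumes "\<forall>j. Suc j < L \<longrightarrow> sg_adj S E (u j) (u (Suc j))"
  shows "j < L \<Longrightarrow> sg_conn S E (u 0) (u j)"
proof (induction j)
  case 0 then show ?case unfolding sg_conn_def by simp
next
  case (Suc j)
  then show ?case using assms unfolding sg_conn_def
    by (meson Suc_lessD rtranclp.rtrancl_into_rtrancl)
qed

lemma window_connected:
  assumes k: "k \<ge> 2" and L: "L > 0"
    and inS: "\<forall>j<L. gv k (s+j) \<in> S" and SV: "S \<subseteq> Gk_V k"
    and cov: "\<forall>y\<in>S. \<exists>j<L. y = gv k (s+j)"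
  shows "sg_connected S (Gk_E k)"
proof -
  have adj: "\<forall>j. Suc j < L \<longrightarrow> sg_adj S (Gk_E k) (gv k (s+j)) (gv k (s+Suc j))"
    using gv_adj[OF k] inS unfolding sg_adj_def
    by (metis Suc_lessD add_Suc_right lessI)
  have c: "\<And>j. j < L \<Longrightarrow> sg_conn S (Gk_E k) (gv k s) (gv k (s+j))"
    using path_conn[of L S "Gk_E k" "\<lambda>j. gv k (s+j)"] adj by simp
  show ?thesis unfolding sg_connected_def
  proof (intro conjI ballI)
    show "S \<noteq> {}" using inS L by auto
  next
    fix u v assume "u \<in> S" "v \<in> S"
    then obtain j1 j2 where "j1 < L" "u = gv k (s+j1)" "j2 < L" "v = gv k (s+j2)" using cov by blast
    then show "sg_conn S (Gk_E k) u v"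
      using c sg_conn_sym unfolding sg_conn_def by (metis rtranclp_trans)
  qed
qed

lemma card_V: "card (Gk_V k) = 2*k"
proof -
  have "card (Gk_V k) = card (W ` {..<k}) + card (P ` {..<k})"
    unfolding Gk_V_def by (rule card_Un_disjoint) auto
  also have "\<dots> = 2*k" by (simp add: card_image inj_on_def)
  finally show ?thesis .
qed

lemma two_conn:
  assumes k: "k \<ge> 3"
  shows "two_connected (Gk_V k) (Gk_E k)"
  unfolding two_connected_def
proof (intro conjI ballI)
  show "3 \<le> card (Gk_V k)" using card_V k by simp
  show "sg_connected (Gk_V k) (Gk_E k)"
  proof (rule window_connected[where L="2*k" and s=0])
    show "\<forall>y\<in>Gk_V k. \<exists>j<2 * k. y = gv k (0 + j)" using gv_surj[of k _ 0] k by fastforce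
  qed (use k gv_in in auto)
next
  fix x assume x: "x \<in> Gk_V k"
  obtain m where m: "m < 2*k" "gv k m = x" using gv_surj[OF _ x, of 0] k by auto
  show "sg_connected (Gk_V k - {x}) (Gk_E k)"
  proof (rule window_connected[where L="2*k - 1" and s="Suc m"])
    show "\<forall>j<2 * k - 1. gv k (Suc m + j) \<in> Gk_V k - {x}"
    proof (intro allI impI)
      fix j assume j: "j < 2*k - 1"
      have "gv k (Suc m + j) \<noteq> gv k m"
      proof
        assume eqg: "gv k (Suc m + j) = gv k m"
        have "Suc m + j = m" by (rule gv_inj[OF _ _ _ _ _ eqg, of m]) (use j k in auto)
        then show False by simp
      qed
      then show "gv k (Suc m + j) \<in> Gk_V k - {x}" using gv_in k m by auto
    qed
    show "\<forall>y\<in>Gk_V k - {x}. \<exists>j<2 * k - 1. y = gv k (Suc m + j)"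
    proof
      fix y assume y: "y \<in> Gk_V k - {x}"
      obtain n where n: "m \<le> n" "n < m + 2*k" "gv k n = y" using gv_surj[of k y m] y k by auto
      have "n \<noteq> m" using n y m by auto
      then show "\<exists>j<2 * k - 1. y = gv k (Suc m + j)" using n
        by (intro exI[of _ "n - Suc m"]) auto
    qed
  qed (use k in auto)
qed

lemma outer_all: "Gk_outer k = Gk_V k"
proof
  show "Gk_outer k \<subseteq> Gk_V k"
  proof
    fix x assume "x \<in> Gk_outer k"
    then obtain i where i: "i < k" "x \<in> spoke1 i \<or> x \<in> spoke2 k i" unfolding Gk_outer_def by auto
    then have "Suc i mod k < k" by simp
    then show "x \<in> Gk_V k" using i unfolding Gk_V_def spoke1_def spoke2_def by auto
  qed
  show "Gk_V k \<subseteq> Gk_outer k"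
    unfolding Gk_V_def Gk_outer_def by (auto simp: spoke1_def)
qed

lemma int3: "k \<ge> 3 \<Longrightarrow> internally_3_connected (Gk_V k) (Gk_E k) (Gk_outer k)"
  unfolding internally_3_connected_def outer_all
  using two_conn by (auto simp: sg_conn_def)

lemma ceil_half: "k \<le> 2*a \<Longrightarrow> nat \<lceil>real k / 2\<rceil> \<le> a"
proof -
  assume "k \<le> 2*a"
  then have "real k / 2 \<le> real a" by simp
  then have "\<lceil>real k / 2\<rceil> \<le> int a" by (simp add: ceiling_le_iff)
  then show ?thesis by (simp only: nat_le_iff)
qed

lemma edges_disj:
  assumes k: "k \<ge> 3" and i: "i < k" and j: "j < k" and ne: "i \<noteq> j"
  shows "{cyc_edge k i, spoke1 i, spoke2 k i} \<inter> {cyc_edge k j, spoke1 j, spoke2 k j} = {}"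
proof -
  have a: "Suc i mod k \<noteq> i" "Suc j mod k \<noteq> j" using i j k by (auto simp: suc_mod)
  have b: "\<not> (i = Suc j mod k \<and> j = Suc i mod k)" using i j k by (auto simp: suc_mod)
  have c1: "cyc_edge k i \<noteq> cyc_edge k j" using b ne unfolding cyc_edge_def doubleton_eq_iff by auto
  have c2: "cyc_edge k i \<noteq> spoke1 j" "cyc_edge k i \<noteq> spoke2 k j"
    "spoke1 i \<noteq> cyc_edge k j" "spoke2 k i \<noteq> cyc_edge k j"
    unfolding cyc_edge_def spoke1_def spoke2_def doubleton_eq_iff by auto
  have c3: "spoke1 i \<noteq> spoke1 j" "spoke2 k i \<noteq> spoke2 k j" "spoke1 i \<noteq> spoke2 k j" "spoke2 k i \<noteq> spoke1 j"
    using ne unfolding spoke1_def spoke2_def doubleton_eq_iff by auto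
  show ?thesis using c1 c2 c3 by blast
qed

lemma Tri_ends:
  "i < k \<Longrightarrow> Tri i \<in> dual_ends (Gk_faces k) (Gk_bd k) e \<longleftrightarrow> e \<in> {cyc_edge k i, spoke1 i, spoke2 k i}"
  unfolding dual_ends_def Gk_faces_def by auto

lemma finite_E: "finite (Gk_E k)"
  unfolding Gk_E_def by auto

lemma dual_part:
  assumes k: "k \<ge> 3"
    and T: "mg_spanning_tree (Gk_faces k) (Gk_E k) (dual_ends (Gk_faces k) (Gk_bd k)) T"
  shows "\<exists>f \<in> Gk_faces k. mg_degree T (dual_ends (Gk_faces k) (Gk_bd k)) f \<ge> nat \<lceil>real k / 2\<rceil>"
proof -
  let ?en = "dual_ends (Gk_faces k) (Gk_bd k)"
  have TE: "T \<subseteq> Gk_E k" and conn: "\<forall>u\<in>Gk_faces k. \<forall>v\<in>Gk_faces k. mg_conn T ?en u v"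
    using T unfolding mg_spanning_tree_def by auto
  have finT: "finite T" using TE finite_E finite_subset by blast
  have ex: "\<exists>e. e \<in> T \<and> Tri i \<in> ?en e" if i: "i < k" for i
  proof -
    have "mg_conn T ?en (Tri i) F1" using conn i unfolding Gk_faces_def by auto
    then have "(mg_adj T ?en)\<^sup>*\<^sup>* (Tri i) F1" unfolding mg_conn_def .
    then obtain y where "mg_adj T ?en (Tri i) y"
      by (cases rule: converse_rtranclpE) auto
    then obtain e where "e \<in> T" "?en e = {Tri i, y}" unfolding mg_adj_def by blast
    then show ?thesis by blast
  qed
  define sel where "sel i = (SOME e. e \<in> T \<and> Tri i \<in> ?en e)" for i
  have sel: "sel i \<in> T \<and> Tri i \<in> ?en (sel i)" if "i < k" for i
    unfolding sel_def using someI_ex[OF ex[OF that]] .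
  have inj: "inj_on sel {..<k}"
  proof (rule inj_onI)
    fix i j assume i: "i \<in> {..<k}" and j: "j \<in> {..<k}" and eq: "sel i = sel j"
    show "i = j"
    proof (rule ccontr)
      assume "i \<noteq> j"
      then have "{cyc_edge k i, spoke1 i, spoke2 k i} \<inter> {cyc_edge k j, spoke1 j, spoke2 k j} = {}"
        using edges_disj[OF k, of i j] i j by simp
      moreover have "sel i \<in> {cyc_edge k i, spoke1 i, spoke2 k i}" using sel[of i] i Tri_ends[of i k "sel i"] by simp
      moreover have "sel i \<in> {cyc_edge k j, spoke1 j, spoke2 k j}" using sel[of j] j Tri_ends[of j k "sel j"] eq by simp
      ultimately show False by blast
    qed
  qed
  have "k \<le> card T"
  proof -
    have "card (sel ` {..<k}) = k" using inj by (simp add: card_image)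
    moreover have "sel ` {..<k} \<subseteq> T" using sel by auto
    then have "card (sel ` {..<k}) \<le> card T" by (rule card_mono[OF finT])
    ultimately show ?thesis by simp
  qed
  define A where "A = {e \<in> T. F1 \<in> ?en e}"
  define B where "B = {e \<in> T. F2 \<in> ?en e}"
  have cover: "T \<subseteq> A \<union> B"
  proof
    fix e assume e: "e \<in> T"
    then obtain i where i: "i < k" "e = cyc_edge k i \<or> e = spoke1 i \<or> e = spoke2 k i"
      using TE unfolding Gk_E_def by auto
    have f1: "F1 \<in> Gk_faces k" "F2 \<in> Gk_faces k" unfolding Gk_faces_def by auto
    from i(2) show "e \<in> A \<union> B"
    proof (elim disjE)
      assume "e = cyc_edge k i"
      then have "e \<in> Gk_bd k F1" using i(1) by simp
      then have "e \<in> A" using e f1 unfolding A_def dual_ends_def by simp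
      then show ?thesis by simp
    next
      assume "e = spoke1 i"
      then have "e \<in> Gk_bd k F2" using i(1) by auto
      then have "e \<in> B" using e f1 unfolding B_def dual_ends_def by simp
      then show ?thesis by simp
    next
      assume "e = spoke2 k i"
      then have "e \<in> Gk_bd k F2" using i(1) by auto
      then have "e \<in> B" using e f1 unfolding B_def dual_ends_def by simp
      then show ?thesis by simp
    qed
  qed
  have "card T \<le> card A + card B"
  proof -
    have "finite (A \<union> B)" using finT unfolding A_def B_def by simp
    then have "card T \<le> card (A \<union> B)" using cover card_mono by blast
    also have "\<dots> \<le> card A + card B" by (rule card_Un_le)
    finally show ?thesis .
  qed
  then have "k \<le> card A + card B" using \<open>k \<le> card T\<close> by simp
  then have "k \<le> 2 * card A \<or> k \<le> 2 * card B" by linarith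
  moreover have "mg_degree T ?en F1 = card A" "mg_degree T ?en F2 = card B"
    unfolding mg_degree_def A_def B_def by simp_all
  moreover have "F1 \<in> Gk_faces k" "F2 \<in> Gk_faces k" unfolding Gk_faces_def by auto
  ultimately show ?thesis
  proof (elim disjE)
    assume "k \<le> 2 * card A"
    then have "nat \<lceil>real k / 2\<rceil> \<le> mg_degree T ?en F1" using ceil_half \<open>mg_degree T ?en F1 = card A\<close> by simp
    then show ?thesis using \<open>F1 \<in> Gk_faces k\<close> by blast
  next
    assume "k \<le> 2 * card B"
    then have "nat \<lceil>real k / 2\<rceil> \<le> mg_degree T ?en F2" using ceil_half \<open>mg_degree T ?en F2 = card B\<close> by simp
    then show ?thesis using \<open>F2 \<in> Gk_faces k\<close> by blast
  qed
qed

theorem mainTheorem7: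
  fixes k :: nat
  assumes "k \<ge> 3"
  shows "internally_3_connected (Gk_V k) (Gk_E k) (Gk_outer k) \<and>
    (\<forall>T. mg_spanning_tree (Gk_faces k) (Gk_E k) (dual_ends (Gk_faces k) (Gk_bd k)) T \<longrightarrow>
       (\<exists>f \<in> Gk_faces k.
          mg_degree T (dual_ends (Gk_faces k) (Gk_bd k)) f \<ge> nat \<lceil>real k / 2\<rceil>))"
proof (intro conjI allI impI)
  show "internally_3_connected (Gk_V k) (Gk_E k) (Gk_outer k)" by (rule int3[OF assms])
next
  fix T assume "mg_spanning_tree (Gk_faces k) (Gk_E k) (dual_ends (Gk_faces k) (Gk_bd k)) T"
  then show "\<exists>f \<in> Gk_faces k.
          mg_degree T (dual_ends (Gk_faces k) (Gk_bd k)) f \<ge> nat \<lceil>real k / 2\<rceil>"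
    by (rule dual_part[OF assms])
qed

end
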